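(* Let $M$ and $k$ be fixed nonnegative integers. Let $\phi(x_1,\dots,x_n)$ be a term of $\mathcal{L}_{\mathrm{Ab}}$ with $n$ variables and depth $l\le k$. Assume $a_1,\dots,a_n\in[-2^M,2^M]$. Then $$f_{\tau(\phi)}(r_{M,k}(a_1),\dots,r_{M,k}(a_n))=r_{M,k}(f_\phi(a_1,\dots,a_n)),$$ and moreover $r_{M,k}(f_\phi(a_1,\dots,a_n))\in\left[\tfrac12-\tfrac{1}{2^{k-l+1}},\tfrac12+\tfrac{1}{2^{k-l+1}}\right]$.
   Context: $\mathcal{L}_{\mathrm{Ab}}=\langle +,-,0,\wedge,\vee\rangle$ is the language of abelian lattice-ordered groups; for an $\mathcal{L}_{\mathrm{Ab}}$-term $\phi$ in variables $x_1,\dots,x_n$, $f_\phi:\mathbb{R}^n\to\mathbb{R}$ is its term function in the ordered additive group of reals ($+$, unary $-$, $0$, $\wedge=\min$, $\vee=\max$). $\mathcal{L}_{\mathrm{MV}[\frac12]}=\langle\oplus,\otimes,\neg,\to,0,1,\tfrac12,\wedge,\vee\rangle$ is interpreted in $[0,1]_{\text{\L}}[\tfrac12]$: domain $[0,1]$, $\neg a=1-a$, $a\otimes b=\max(0,a+b-1)$, $a\oplus b=\min(1,a+b)$, $a\to b=\min(1,1-a+b)$, $\wedge=\min$, $\vee=\max$, constants $0,1,\tfrac12$ interpreted as themselves; $f_\psi:[0,1]^n\to[0,1]$ denotes the term function of an $\mathcal{L}_{\mathrm{MV}[\frac12]}$-term $\psi$. Depth: variables and constants have depth $0$, $\mathrm{depth}(-\phi)=\mathrm{depth}(\phi)+1$,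 and $\mathrm{depth}(\phi\circ\psi)=\max(\mathrm{depth}(\phi),\mathrm{depth}(\psi))+1$ for $\circ\in\{+,\wedge,\vee\}$. The translation $\tau$ from $\mathcal{L}_{\mathrm{Ab}}$-terms to $\mathcal{L}_{\mathrm{MV}[\frac12]}$-terms is defined recursively: $\tau(x)=x$ for variables $x$; $\tau(0)=\tfrac12$; $\tau(-\phi)=\neg\tau(\phi)$; $\tau(\phi+\psi)=(\tau(\phi)\oplus\tau(\psi))\otimes(\tfrac12\oplus(\tau(\phi)\otimes\tau(\psi)))$; $\tau(\phi\vee\psi)=\tau(\phi)\vee\tau(\psi)$; $\tau(\phi\wedge\psi)=\tau(\phi)\wedge\tau(\psi)$. For nonnegative integers $M,k$, $r_{M,k}:\mathbb{R}\to\mathbb{R}$ is $r_{M,k}(a)=\frac{a}{2^{M+k+1}}+\frac12$. *)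

theory Defs
  imports Complex_Main
begin

datatype ab_term = AVar nat | AZero | ANeg ab_term | AAdd ab_term ab_term
  | AMeet ab_term ab_term | AJoin ab_term ab_term

datatype mv_term = MVar nat | MZero | MOne | MHalf | MNeg mv_term
  | MOplus mv_term mv_term | MOtimes mv_term mv_term | MImp mv_term mv_term
  | MMeet mv_term mv_term | MJoin mv_term mv_term

fun ab_vars :: "ab_term \<Rightarrow> nat set" where
  "ab_vars (AVar i) = {i}"
| "ab_vars AZero = {}"
| "ab_vars (ANeg p) = ab_vars p"
| "ab_vars (AAdd p q) = ab_vars p \<union> ab_vars q"
| "ab_vars (AMeet p q) = ab_vars p \<union> ab_vars q"
| "ab_vars (AJoin p q) = ab_vars p \<union> ab_vars q"

fun depth :: "ab_term \<Rightarrow> nat" where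
  "depth (AVar i) = 0"
| "depth AZero = 0"
| "depth (ANeg p) = depth p + 1"
| "depth (AAdd p q) = max (depth p) (depth q) + 1"
| "depth (AMeet p q) = max (depth p) (depth q) + 1"
| "depth (AJoin p q) = max (depth p) (depth q) + 1"

text \<open>Term function in the ordered additive group of reals; variable x_(i+1) is AVar i.\<close>
fun ab_eval :: "ab_term \<Rightarrow> (nat \<Rightarrow> real) \<Rightarrow> real" where
  "ab_eval (AVar i) a = a i"
| "ab_eval AZero a = 0"
| "ab_eval (ANeg p) a = - ab_eval p a"
| "ab_eval (AAdd p q) a = ab_eval p a + ab_eval q a"
| "ab_eval (AMeet p q) a = min (ab_eval p a) (ab_eval q a)"
| "ab_eval (AJoin p q) a = max (ab_eval p a) (ab_eval q a)"

fun mv_eval :: "mv_term \<Rightarrow> (nat \<Rightarrow> real) \<Rightarrow> real" where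
  "mv_eval (MVar i) a = a i"
| "mv_eval MZero a = 0"
| "mv_eval MOne a = 1"
| "mv_eval MHalf a = 1/2"
| "mv_eval (MNeg p) a = 1 - mv_eval p a"
| "mv_eval (MOplus p q) a = min 1 (mv_eval p a + mv_eval q a)"
| "mv_eval (MOtimes p q) a = max 0 (mv_eval p a + mv_eval q a - 1)"
| "mv_eval (MImp p q) a = min 1 (1 - mv_eval p a + mv_eval q a)"
| "mv_eval (MMeet p q) a = min (mv_eval p a) (mv_eval q a)"
| "mv_eval (MJoin p q) a = max (mv_eval p a) (mv_eval q a)"

fun tau :: "ab_term \<Rightarrow> mv_term" where
  "tau (AVar i) = MVar i"
| "tau AZero = MHalf"
| "tau (ANeg p) = MNeg (tau p)"
| "tau (AAdd p q) = MOtimes (MOplus (tau p) (tau q)) (MOplus MHalf (MOtimes (tau p) (tau q)))"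
| "tau (AJoin p q) = MJoin (tau p) (tau q)"
| "tau (AMeet p q) = MMeet (tau p) (tau q)"

definition r :: "nat \<Rightarrow> nat \<Rightarrow> real \<Rightarrow> real" where
  "r M k a = a / 2 ^ (M + k + 1) + 1/2"

end

theory Submission
  imports Defs
begin

lemma add_step:
  fixes u v :: real
  assumes "\<bar>u\<bar> \<le> 1/4" "\<bar>v\<bar> \<le> 1/4"
  shows "max 0 (min 1 ((u + 1/2) + (v + 1/2)) + min 1 (1/2 + max 0 ((u + 1/2) + (v + 1/2) - 1)) - 1)
         = (u + v) + 1/2"
  using assms by (simp add: min_def max_def abs_if split: if_splits)

lemma main_gen:
  fixes M k :: nat and a :: "nat \<Rightarrow> real"
  assumes "depth \<phi> \<le> k" "\<forall>i\<in>ab_vars \<phi>. \<bar>a i\<bar> \<le> 2 ^ M"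
  shows "mv_eval (tau \<phi>) (\<lambda>i. a i / 2 ^ (M+k+1) + 1/2) = ab_eval \<phi> a / 2 ^ (M+k+1) + 1/2
         \<and> \<bar>ab_eval \<phi> a\<bar> \<le> 2 ^ (M + depth \<phi>)"
  using assms
proof (induction \<phi>)
  case (AVar x)
  then show ?case by simp
next
  case AZero
  then show ?case by simp
next
  case (ANeg p)
  have "(2::real) ^ (M + depth p) \<le> 2 ^ (M + (depth p + 1))"
    by (rule power_increasing) auto
  moreover have "1 - (x / 2 ^ (M+k+1) + 1/2) = (- x) / 2 ^ (M+k+1) + 1/2" for x :: real
    by (simp add: field_simps)
  ultimately show ?case using ANeg by auto
next
  case (AMeet p q)
  define B :: real where "B = 2 ^ (M + depth (AMeet p q))"
  have h1: "(2::real) ^ (M + depth p) \<le> B" unfolding B_def by (rule power_increasing) auto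
  have h2: "(2::real) ^ (M + depth q) \<le> B" unfolding B_def by (rule power_increasing) auto
  have E: "min (x / 2 ^ (M+k+1) + 1/2) (y / 2 ^ (M+k+1) + 1/2) = min x y / 2 ^ (M+k+1) + 1/2" for x y :: real
    by (simp add: min_def divide_le_cancel)
  have h: "\<bar>ab_eval p a\<bar> \<le> 2 ^ (M + depth p)" "\<bar>ab_eval q a\<bar> \<le> 2 ^ (M + depth q)"
    "mv_eval (tau p) (\<lambda>i. a i / 2 ^ (M+k+1) + 1/2) = ab_eval p a / 2 ^ (M+k+1) + 1/2"
    "mv_eval (tau q) (\<lambda>i. a i / 2 ^ (M+k+1) + 1/2) = ab_eval q a / 2 ^ (M+k+1) + 1/2"
    using AMeet by auto
  have "\<bar>ab_eval (AMeet p q) a\<bar> \<le> B"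
    "mv_eval (tau (AMeet p q)) (\<lambda>i. a i / 2 ^ (M+k+1) + 1/2) = ab_eval (AMeet p q) a / 2 ^ (M+k+1) + 1/2"
    proof -
      have "\<bar>ab_eval p a\<bar> \<le> B" "\<bar>ab_eval q a\<bar> \<le> B" using h1 h2 h(1,2) by linarith+
      then show "\<bar>ab_eval (AMeet p q) a\<bar> \<le> B" by (simp add: min_def)
      show "mv_eval (tau (AMeet p q)) (\<lambda>i. a i / 2 ^ (M+k+1) + 1/2) = ab_eval (AMeet p q) a / 2 ^ (M+k+1) + 1/2"
        using h(3,4) E by simp
    qed
  then show ?case unfolding B_def by blast
next
  case (AJoin p q)
  define B :: real where "B = 2 ^ (M + depth (AJoin p q))"
  have h1: "(2::real) ^ (M + depth p) \<le> B" unfolding B_def by (rule power_increasing) auto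
  have h2: "(2::real) ^ (M + depth q) \<le> B" unfolding B_def by (rule power_increasing) auto
  have E: "max (x / 2 ^ (M+k+1) + 1/2) (y / 2 ^ (M+k+1) + 1/2) = max x y / 2 ^ (M+k+1) + 1/2" for x y :: real
    by (simp add: max_def divide_le_cancel)
  have h: "\<bar>ab_eval p a\<bar> \<le> 2 ^ (M + depth p)" "\<bar>ab_eval q a\<bar> \<le> 2 ^ (M + depth q)"
    "mv_eval (tau p) (\<lambda>i. a i / 2 ^ (M+k+1) + 1/2) = ab_eval p a / 2 ^ (M+k+1) + 1/2"
    "mv_eval (tau q) (\<lambda>i. a i / 2 ^ (M+k+1) + 1/2) = ab_eval q a / 2 ^ (M+k+1) + 1/2"
    using AJoin by auto
  have "\<bar>ab_eval (AJoin p q) a\<bar> \<le> B"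
    "mv_eval (tau (AJoin p q)) (\<lambda>i. a i / 2 ^ (M+k+1) + 1/2) = ab_eval (AJoin p q) a / 2 ^ (M+k+1) + 1/2"
    proof -
      have "\<bar>ab_eval p a\<bar> \<le> B" "\<bar>ab_eval q a\<bar> \<le> B" using h1 h2 h(1,2) by linarith+
      then show "\<bar>ab_eval (AJoin p q) a\<bar> \<le> B" by (simp add: max_def)
      show "mv_eval (tau (AJoin p q)) (\<lambda>i. a i / 2 ^ (M+k+1) + 1/2) = ab_eval (AJoin p q) a / 2 ^ (M+k+1) + 1/2"
        using h(3,4) E by simp
    qed
  then show ?case unfolding B_def by blast
next
  case (AAdd p q)
  define c :: real where "c = 2 ^ (M+k+1)"
  have cpos: "c > 0" unfolding c_def by simp
  have IHp: "mv_eval (tau p) (\<lambda>i. a i / c + 1/2) = ab_eval p a / c + 1/2"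
     "\<bar>ab_eval p a\<bar> \<le> 2 ^ (M + depth p)" using AAdd unfolding c_def by auto
  have IHq: "mv_eval (tau q) (\<lambda>i. a i / c + 1/2) = ab_eval q a / c + 1/2"
     "\<bar>ab_eval q a\<bar> \<le> 2 ^ (M + depth q)" using AAdd unfolding c_def by auto
  have dk: "depth p + 1 \<le> k" "depth q + 1 \<le> k" using AAdd.prems by auto
  have c4: "c = 4 * 2 ^ (M + (k - 1))"
  proof -
    have "M + k + 1 = 2 + (M + (k - 1))" using dk by simp
    then have "c = 2 ^ (2 + (M + (k - 1)))" unfolding c_def by metis
    also have "\<dots> = 4 * 2 ^ (M + (k - 1))" by (simp only: power_add) simp
    finally show ?thesis .
  qed
  have "(2::real) ^ (M + depth p) \<le> 2 ^ (M + (k - 1))" by (rule power_increasing) (use dk in auto)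
  hence "\<bar>ab_eval p a\<bar> \<le> 2 ^ (M + (k - 1))" using IHp(2) by linarith
  hence bp: "\<bar>ab_eval p a / c\<bar> \<le> 1/4" using cpos c4 by (simp add: abs_divide divide_le_eq)
  have "(2::real) ^ (M + depth q) \<le> 2 ^ (M + (k - 1))" by (rule power_increasing) (use dk in auto)
  hence "\<bar>ab_eval q a\<bar> \<le> 2 ^ (M + (k - 1))" using IHq(2) by linarith
  hence bq: "\<bar>ab_eval q a / c\<bar> \<le> 1/4" using cpos c4 by (simp add: abs_divide divide_le_eq)
  have eq: "mv_eval (tau (AAdd p q)) (\<lambda>i. a i / c + 1/2) = ab_eval (AAdd p q) a / c + 1/2"
  proof -
    define u where "u = ab_eval p a / c"
    define v where "v = ab_eval q a / c"
    have "\<bar>u\<bar> \<le> 1/4" "\<bar>v\<bar> \<le> 1/4" using bp bq u_def v_def by auto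
    then have "-1/4 \<le> u" "u \<le> 1/4" "-1/4 \<le> v" "v \<le> 1/4" by (simp_all only: abs_le_iff) linarith+
    note bds = this
    have e1: "mv_eval (tau p) (\<lambda>i. a i / c + 1/2) = u + 1/2" using IHp(1) u_def by simp
    have e2: "mv_eval (tau q) (\<lambda>i. a i / c + 1/2) = v + 1/2" using IHq(1) v_def by simp
    have e3: "ab_eval (AAdd p q) a / c + 1/2 = u + v + 1/2" by (simp add: u_def v_def add_divide_distrib)
    show ?thesis unfolding e3 tau.simps mv_eval.simps e1 e2
      using bds by (simp only: min_def max_def split: if_splits) linarith
  qed
  have P1: "(2::real) ^ (M + depth p) \<le> 2 ^ (M + max (depth p) (depth q))"
    by (rule power_increasing) auto
  have P2: "(2::real) ^ (M + depth q) \<le> 2 ^ (M + max (depth p) (depth q))"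
    by (rule power_increasing) auto
  have "\<bar>ab_eval p a + ab_eval q a\<bar> \<le> \<bar>ab_eval p a\<bar> + \<bar>ab_eval q a\<bar>" by (rule abs_triangle_ineq)
  also have "\<dots> \<le> 2 * 2 ^ (M + max (depth p) (depth q))" using P1 P2 IHp(2) IHq(2) by linarith
  also have "\<dots> = 2 ^ (M + (max (depth p) (depth q) + 1))" by simp
  finally have "\<bar>ab_eval (AAdd p q) a\<bar> \<le> 2 ^ (M + (max (depth p) (depth q) + 1))" by simp
  then show ?case using eq unfolding c_def by simp
qed

theorem mainTheorem4:
  fixes M k n l :: nat and \<phi> :: ab_term and a :: "nat \<Rightarrow> real"
  assumes "ab_vars \<phi> \<subseteq> {..<n}"
    and "depth \<phi> = l" and "l \<le> k"
    and "\<forall>i<n. a i \<in> {- (2 ^ M) .. 2 ^ M}"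
  shows "mv_eval (tau \<phi>) (\<lambda>i. r M k (a i)) = r M k (ab_eval \<phi> a)
    \<and> r M k (ab_eval \<phi> a) \<in> {1/2 - 1 / 2 ^ (k - l + 1) .. 1/2 + 1 / 2 ^ (k - l + 1)}"
proof -
  have v: "\<forall>i\<in>ab_vars \<phi>. \<bar>a i\<bar> \<le> 2 ^ M" using assms(1,4) by (auto simp: abs_le_iff)
  note G = main_gen[OF _ v, of k] 
  have G1: "mv_eval (tau \<phi>) (\<lambda>i. a i / 2 ^ (M+k+1) + 1/2) = ab_eval \<phi> a / 2 ^ (M+k+1) + 1/2"
   and G2: "\<bar>ab_eval \<phi> a\<bar> \<le> 2 ^ (M + l)" using G assms(2,3) by auto
  have pw: "(2::real) ^ (M+k+1) = 2 ^ (M + l) * 2 ^ (k - l + 1)"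
    using assms(3) by (simp add: power_add[symmetric])
  have "\<bar>ab_eval \<phi> a / 2 ^ (M+k+1)\<bar> \<le> 1 / 2 ^ (k - l + 1)"
    using G2 unfolding pw by (simp add: abs_divide divide_le_eq field_simps)
  then have "- (1 / 2 ^ (k - l + 1)) \<le> ab_eval \<phi> a / 2 ^ (M+k+1)"
     "ab_eval \<phi> a / 2 ^ (M+k+1) \<le> 1 / 2 ^ (k - l + 1)" by (simp_all only: abs_le_iff) linarith+
  then show ?thesis using G1 unfolding r_def by simp
qed

end
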